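(* Let $\Sigma=(\sigma_0,\sigma_\infty,\sigma_1,\tau)$ be a special admissible 4-tuple in $S_{2n}^4$ such that $\sigma_1\tau$ contains a 3-cycle $(2n-h,h,k)$. Then the conjugacy class of $\Sigma$ contains exactly three special admissible 4-tuples. Consequently, the number of conjugacy classes of admissible 4-tuples for which $\sigma_1\tau$ is a product of $n-3$ disjoint transpositions and a 3-cycle equals $\frac{(n-1)(n-2)}{2}$.
   Context: Permutation products are read left to right. An admissible 4-tuple is $(\sigma_0,\sigma_\infty,\sigma_1,\tau)\in S_{2n}^4$ with $\sigma_0$ a product of $n$ disjoint transpositions, $\sigma_\infty$ a $2n$-cycle, $\sigma_1$ a product of $n-2$ disjoint transpositions, $\tau$ a transposition, and $\sigma_0\sigma_\infty\sigma_1\tau=\mathrm{id}$ (these are, up to conjugation, the monodromy tuples of $A^2$ for Pell–Abel solutions of degree $n$ with $\deg D=4$ and branching over $0,1,\infty$ and one further point). It is special if $\sigma_\infty=(2n,2n-1,\dots,1)$ and $\sigma_1(2n)=\tau(2n)=2n$. Conjugacy means simultaneous conjugation by some $\gamma\in S_{2n}$. *)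

theory Defs
  imports "HOL-Combinatorics.Permutations" "HOL-Combinatorics.Transposition"
begin

text \<open>Permutations of S_{2n} are functions nat => nat permuting {1..2n}.
  Products are read left to right: the product sigma rho (first sigma, then rho)
  is the function rho o sigma.\<close>

definition pts :: "nat \<Rightarrow> nat set" where
  "pts n = {1..2*n}"

definition moved :: "(nat \<Rightarrow> nat) \<Rightarrow> nat set \<Rightarrow> nat set" where
  "moved \<sigma> S = {x \<in> S. \<sigma> x \<noteq> x}"

definition disj_transp :: "nat set \<Rightarrow> nat \<Rightarrow> (nat \<Rightarrow> nat) \<Rightarrow> bool" where
  "disj_transp S m \<sigma> \<longleftrightarrow> \<sigma> permutes S \<and> (\<forall>x. \<sigma> (\<sigma> x) = x) \<and> card (moved \<sigma> S) = 2 * m"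

definition full_cycle :: "nat set \<Rightarrow> (nat \<Rightarrow> nat) \<Rightarrow> bool" where
  "full_cycle S \<sigma> \<longleftrightarrow> \<sigma> permutes S \<and> (\<forall>x\<in>S. S = {(\<sigma> ^^ k) x | k. True})"

definition is_transp :: "nat set \<Rightarrow> (nat \<Rightarrow> nat) \<Rightarrow> bool" where
  "is_transp S \<tau> \<longleftrightarrow> (\<exists>a\<in>S. \<exists>b\<in>S. a \<noteq> b \<and> \<tau> = transpose a b)"

definition has_cycle3 :: "(nat \<Rightarrow> nat) \<Rightarrow> nat \<Rightarrow> nat \<Rightarrow> nat \<Rightarrow> bool" where
  "has_cycle3 \<sigma> a b c \<longleftrightarrow> distinct [a, b, c] \<and> \<sigma> a = b \<and> \<sigma> b = c \<and> \<sigma> c = a"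

definition transp_and_3cycle :: "nat set \<Rightarrow> nat \<Rightarrow> (nat \<Rightarrow> nat) \<Rightarrow> bool" where
  "transp_and_3cycle S m \<sigma> \<longleftrightarrow> \<sigma> permutes S \<and>
     (\<exists>a b c. has_cycle3 \<sigma> a b c \<and> (\<forall>x. x \<notin> {a, b, c} \<longrightarrow> \<sigma> (\<sigma> x) = x)) \<and>
     card (moved \<sigma> S) = 2 * m + 3"

type_synonym tuple4 = "(nat \<Rightarrow> nat) \<times> (nat \<Rightarrow> nat) \<times> (nat \<Rightarrow> nat) \<times> (nat \<Rightarrow> nat)"

definition admissible :: "nat \<Rightarrow> tuple4 \<Rightarrow> bool" where
  "admissible n T \<longleftrightarrow> (case T of (s0, sinf, s1, t) \<Rightarrow>
     disj_transp (pts n) n s0 \<and> full_cycle (pts n) sinf \<and>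
     disj_transp (pts n) (n - 2) s1 \<and> is_transp (pts n) t \<and>
     t \<circ> s1 \<circ> sinf \<circ> s0 = id)"

definition sigma_inf_std :: "nat \<Rightarrow> nat \<Rightarrow> nat" where
  "sigma_inf_std n x = (if x \<in> pts n then (if x = 1 then 2 * n else x - 1) else x)"

definition special :: "nat \<Rightarrow> tuple4 \<Rightarrow> bool" where
  "special n T \<longleftrightarrow> admissible n T \<and> (case T of (s0, sinf, s1, t) \<Rightarrow>
     sinf = sigma_inf_std n \<and> s1 (2 * n) = 2 * n \<and> t (2 * n) = 2 * n)"

definition conj4 :: "(nat \<Rightarrow> nat) \<Rightarrow> tuple4 \<Rightarrow> tuple4" where
  "conj4 g T = (case T of (s0, sinf, s1, t) \<Rightarrow>
     (g \<circ> s0 \<circ> inv g, g \<circ> sinf \<circ> inv g, g \<circ> s1 \<circ> inv g, g \<circ> t \<circ> inv g))"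

definition conj_class :: "nat \<Rightarrow> tuple4 \<Rightarrow> tuple4 set" where
  "conj_class n T = {T'. \<exists>g. g permutes pts n \<and> T' = conj4 g T}"

end

theory Submission
  imports Defs
begin

lemma cj_apply:
  assumes "g permutes S" shows "(g \<circ> s \<circ> inv g) (g x) = g (s x)"
  using assms by (simp add: permutes_inverses)

lemma cj_comp:
  assumes "g permutes S" shows "(g \<circ> s \<circ> inv g) \<circ> (g \<circ> r \<circ> inv g) = g \<circ> (s \<circ> r) \<circ> inv g"
  using assms by (auto simp: fun_eq_iff permutes_inverses)

lemma cj_invol:
  assumes "g permutes S" "\<forall>x. s (s x) = x" shows "\<forall>x. (g \<circ> s \<circ> inv g) ((g \<circ> s \<circ> inv g) x) = x"
  using assms by (auto simp: permutes_inverses)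

lemma cj_permutes:
  assumes "g permutes S" "s permutes S" shows "(g \<circ> s \<circ> inv g) permutes S"
  using assms by (meson permutes_compose permutes_inv)

lemma cj_moved:
  assumes "g permutes S" shows "moved (g \<circ> s \<circ> inv g) S = g ` moved s S"
proof -
  have "moved (g \<circ> s \<circ> inv g) S = {y \<in> S. g (s (inv g y)) \<noteq> y}" by (simp add: moved_def)
  also have "\<dots> = g ` {x \<in> S. s x \<noteq> x}"
  proof (intro set_eqI iffI)
    fix y assume "y \<in> {y \<in> S. g (s (inv g y)) \<noteq> y}"
    then show "y \<in> g ` {x \<in> S. s x \<noteq> x}"
      using assms by (auto simp: permutes_inverses permutes_in_image permutes_inv[OF assms]
          intro!: image_eqI[where x="inv g y"])
  next
    fix y assume "y \<in> g ` {x \<in> S. s x \<noteq> x}"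
    then show "y \<in> {y \<in> S. g (s (inv g y)) \<noteq> y}"
      using assms by (auto simp: permutes_inverses permutes_in_image inj_eq permutes_inj)
  qed
  finally show ?thesis by (simp add: moved_def)
qed

lemma cj_disj_transp:
  assumes "g permutes S" "disj_transp S m s" shows "disj_transp S m (g \<circ> s \<circ> inv g)"
proof -
  have "card (moved (g \<circ> s \<circ> inv g) S) = card (moved s S)"
    using assms(1) by (metis cj_moved card_image inj_on_subset subset_UNIV permutes_inj)
  then show ?thesis using assms cj_invol cj_permutes unfolding disj_transp_def by metis
qed

lemma cj_funpow:
  assumes "g permutes S" shows "(g \<circ> s \<circ> inv g) ^^ k = g \<circ> (s ^^ k) \<circ> inv g"
proof (induction k)
  case 0 then show ?case using assms by (simp add: permutes_inv_o)
next
  case (Suc k)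
  have "(g \<circ> s \<circ> inv g) ^^ Suc k = (g \<circ> s \<circ> inv g) \<circ> (g \<circ> (s ^^ k) \<circ> inv g)"
    by (simp only: funpow.simps Suc.IH)
  also have "\<dots> = g \<circ> (s ^^ Suc k) \<circ> inv g" using assms
    by (simp add: fun_eq_iff permutes_inverses)
  finally show ?case .
qed

lemma cj_full_cycle:
  assumes "g permutes S" "full_cycle S s" shows "full_cycle S (g \<circ> s \<circ> inv g)"
  unfolding full_cycle_def
proof (intro conjI ballI)
  show "(g \<circ> s \<circ> inv g) permutes S" using assms cj_permutes full_cycle_def by blast
  fix x assume x: "x \<in> S"
  have ix: "inv g x \<in> S" using x permutes_inv[OF assms(1)] by (simp add: permutes_in_image)
  have S: "S = {(s ^^ k) (inv g x) | k. True}" using assms(2) ix by (simp add: full_cycle_def)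
  have "{((g \<circ> s \<circ> inv g) ^^ k) x | k. True} = g ` {(s ^^ k) (inv g x) | k. True}"
    by (auto simp: cj_funpow[OF assms(1)])
  also have "\<dots> = S" using S permutes_image[OF assms(1)] by simp
  finally show "S = {((g \<circ> s \<circ> inv g) ^^ k) x | k. True}" by simp
qed

lemma cj_transpose:
  assumes "g permutes S" shows "g \<circ> transpose a b \<circ> inv g = transpose (g a) (g b)"
proof
  fix y
  obtain x where y: "y = g x" using assms by (metis permutes_inverses(1))
  have inj: "inj g" using assms permutes_inj by blast
  show "(g \<circ> transpose a b \<circ> inv g) y = transpose (g a) (g b) y"
    unfolding y cj_apply[OF assms] using inj by (auto simp: transpose_def inj_eq)
qed

lemma cj_is_transp:
  assumes "g permutes S" "is_transp S t" shows "is_transp S (g \<circ> t \<circ> inv g)"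
  using assms unfolding is_transp_def
  by (metis cj_transpose permutes_in_image permutes_inj inj_eq)

lemma conj4_admissible:
  assumes "g permutes pts n" "admissible n T" shows "admissible n (conj4 g T)"
proof -
  obtain s0 si s1 t where T: "T = (s0, si, s1, t)" by (cases T) auto
  have e: "t \<circ> s1 \<circ> si \<circ> s0 = id" using assms T by (simp add: admissible_def)
  have "(g \<circ> t \<circ> inv g) \<circ> (g \<circ> s1 \<circ> inv g) \<circ> (g \<circ> si \<circ> inv g) \<circ> (g \<circ> s0 \<circ> inv g)
      = g \<circ> (t \<circ> s1 \<circ> si \<circ> s0) \<circ> inv g" using assms(1) by (simp add: fun_eq_iff permutes_inverses)
  also have "\<dots> = id" using e assms(1) by (simp add: permutes_inv_o)
  finally show ?thesis using assms T unfolding admissible_def conj4_def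
    by (auto intro: cj_disj_transp cj_full_cycle cj_is_transp)
qed

lemma conj4_comp:
  assumes "g permutes S" "h permutes S" shows "conj4 g (conj4 h T) = conj4 (g \<circ> h) T"
proof -
  have "inv (g \<circ> h) = inv h \<circ> inv g"
    using assms by (simp add: o_inv_distrib permutes_bij)
  then show ?thesis by (cases T) (simp add: conj4_def comp_assoc)
qed

lemma conj4_id: "conj4 id T = T"
  by (cases T) (simp add: conj4_def)

lemma conj_class_eq:
  assumes "g permutes pts n" shows "conj_class n (conj4 g T) = conj_class n T"
proof (intro set_eqI iffI)
  fix T' assume "T' \<in> conj_class n (conj4 g T)"
  then obtain h where "h permutes pts n" "T' = conj4 h (conj4 g T)" by (auto simp: conj_class_def)
  then show "T' \<in> conj_class n T" using assms
    by (auto simp: conj_class_def conj4_comp intro: permutes_compose)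
next
  fix T' assume "T' \<in> conj_class n T"
  then obtain h where h: "h permutes pts n" "T' = conj4 h T" by (auto simp: conj_class_def)
  have "conj4 (h \<circ> inv g) (conj4 g T) = conj4 (h \<circ> inv g \<circ> g) T"
    using assms h by (meson conj4_comp permutes_inv permutes_compose)
  also have "\<dots> = T'" using h assms by (simp add: comp_assoc permutes_inv_o)
  finally show "T' \<in> conj_class n (conj4 g T)"
    using assms h by (auto simp: conj_class_def intro!: exI[of _ "h \<circ> inv g"] permutes_compose permutes_inv)
qed

lemma funpow_inj_cancel:
  fixes s :: "'a \<Rightarrow> 'a"
  assumes "inj s" "(s ^^ i) x = (s ^^ i) y" shows "x = y"
proof -
  have "inj (s ^^ i)" using assms(1) by simp
  then show ?thesis using assms(2) by (simp add: inj_eq)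
qed

lemma orbit_facts:
  assumes fc: "full_cycle S s" and fin: "finite S" and z: "z \<in> S"
  defines "f \<equiv> \<lambda>k. (s ^^ k) z"
  shows "f (card S) = z" "inj_on f {0..<card S}" "f ` {0..<card S} = S" "\<And>k. f k = f (k mod card S)"
proof -
  have perm: "s permutes S" using fc by (simp add: full_cycle_def)
  have inj: "inj s" using perm permutes_inj by blast
  have S: "S = range f" using fc z by (auto simp: full_cycle_def f_def)
  have "\<not> inj_on f {0..card S}"
  proof
    assume "inj_on f {0..card S}"
    then have "card (f ` {0..card S}) = Suc (card S)" by (simp add: card_image)
    moreover have "f ` {0..card S} \<subseteq> S" using S by auto
    ultimately have "card (f ` {0..card S}) \<le> card S" by (metis card_mono[OF fin])
    then show False using \<open>card (f ` {0..card S}) = Suc (card S)\<close> by linarith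
  qed
  then obtain i j where ij: "i < j" "f i = f j"
    by (metis inj_onI linorder_neq_iff)
  have "(s ^^ i) ((s ^^ (j - i)) z) = (s ^^ (i + (j - i))) z" by (simp add: funpow_add)
  then have "f i = (s ^^ i) ((s ^^ (j - i)) z)" using ij by (simp add: f_def)
  then have "(s ^^ i) ((s ^^ (j - i)) z) = (s ^^ i) z" using ij by (simp add: f_def)
  then have ex: "f (j - i) = z" using funpow_inj_cancel[OF inj] by (simp add: f_def)
  define p where "p = (LEAST p. 0 < p \<and> f p = z)"
  have p: "0 < p" "f p = z" using LeastI[of "\<lambda>p. 0 < p \<and> f p = z" "j - i"] ex ij
    by (auto simp: p_def)
  have pmin: "\<And>q. 0 < q \<Longrightarrow> q < p \<Longrightarrow> f q \<noteq> z"
    using not_less_Least p_def by blast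
  have mult: "f (q * p) = z" for q
  proof (induction q)
    case 0 then show ?case by (simp add: f_def)
  next
    case (Suc q)
    have "f (Suc q * p) = (s ^^ (p + q * p)) z" by (simp add: f_def)
    also have "\<dots> = (s ^^ p) ((s ^^ (q * p)) z)" by (simp add: funpow_add)
    finally have "f (Suc q * p) = (s ^^ p) ((s ^^ (q * p)) z)" .
    then show ?case using Suc p by (simp add: f_def)
  qed
  have modp: "f k = f (k mod p)" for k
  proof -
    have "f k = f (k mod p + (k div p) * p)" by simp
    also have "\<dots> = (s ^^ (k mod p)) (f ((k div p) * p))" unfolding f_def funpow_add by simp
    also have "\<dots> = f (k mod p)" using mult by (simp add: f_def)
    finally show ?thesis .
  qed
  have Sp: "f ` {0..<p} = S"
  proof
    show "f ` {0..<p} \<subseteq> S" using S by auto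
    show "S \<subseteq> f ` {0..<p}"
    proof
      fix x assume "x \<in> S"
      then obtain k where "x = f k" using S by auto
      then show "x \<in> f ` {0..<p}" using modp[of k] p(1) by auto
    qed
  qed
  have injp: "inj_on f {0..<p}"
  proof (rule inj_onI)
    fix a b assume ab: "a \<in> {0..<p}" "b \<in> {0..<p}" "f a = f b"
    show "a = b"
    proof (rule ccontr)
      assume "a \<noteq> b"
      then consider "a < b" | "b < a" by linarith
      then show False
      proof cases
        case 1
        have "(s ^^ a) (f (b - a)) = (s ^^ (a + (b - a))) z" by (simp add: f_def funpow_add)
        then have "f a = (s ^^ a) (f (b - a))" using 1 ab by (simp add: f_def)
        then have "(s ^^ a) (f (b - a)) = (s ^^ a) z" using ab by (simp add: f_def)
        then have "f (b - a) = z" using funpow_inj_cancel[OF inj] by blast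
        then show False using pmin[of "b - a"] 1 ab by (simp add: less_imp_diff_less)
      next
        case 2
        have "(s ^^ b) (f (a - b)) = (s ^^ (b + (a - b))) z" by (simp add: f_def funpow_add)
        then have "f b = (s ^^ b) (f (a - b))" using 2 ab by (simp add: f_def)
        then have "(s ^^ b) (f (a - b)) = (s ^^ b) z" using ab by (simp add: f_def)
        then have "f (a - b) = z" using funpow_inj_cancel[OF inj] by blast
        then show False using pmin[of "a - b"] 2 ab by (simp add: less_imp_diff_less)
      qed
    qed
  qed
  have cp: "card S = p" using Sp injp card_image by fastforce
  show "f (card S) = z" using cp p by simp
  show "inj_on f {0..<card S}" using cp injp by simp
  show "f ` {0..<card S} = S" using cp Sp by simp
  show "\<And>k. f k = f (k mod card S)" unfolding cp by (rule modp)
qed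

lemma permutes_funpow: "p permutes S \<Longrightarrow> (p ^^ k) permutes S"
  by (induction k) (auto intro: permutes_compose)

definition cinv :: "nat \<Rightarrow> nat \<Rightarrow> nat" where
  "cinv n x = (if x \<in> pts n then (if x = 2 * n then 1 else x + 1) else x)"

lemma c_cinv [simp]: "sigma_inf_std n (cinv n x) = x"
  by (auto simp: sigma_inf_std_def cinv_def pts_def)

lemma cinv_c [simp]: "cinv n (sigma_inf_std n x) = x"
  by (auto simp: sigma_inf_std_def cinv_def pts_def)

lemma card_pts [simp]: "card (pts n) = 2 * n" by (simp add: pts_def)
lemma finite_pts [simp]: "finite (pts n)" by (simp add: pts_def)

lemma c_perm: "sigma_inf_std n permutes pts n"
proof (rule inj_imp_permutes)
  show "inj_on (sigma_inf_std n) (pts n)" by (metis cinv_c inj_onI)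
  show "\<And>x. x \<in> pts n \<Longrightarrow> sigma_inf_std n x \<in> pts n" by (auto simp: sigma_inf_std_def pts_def)
  show "\<And>x. x \<notin> pts n \<Longrightarrow> sigma_inf_std n x = x" by (auto simp: sigma_inf_std_def)
qed simp

lemma cinv_perm: "cinv n permutes pts n"
proof (rule inj_imp_permutes)
  show "inj_on (cinv n) (pts n)" by (metis c_cinv inj_onI)
  show "\<And>x. x \<in> pts n \<Longrightarrow> cinv n x \<in> pts n" by (auto simp: cinv_def pts_def)
  show "\<And>x. x \<notin> pts n \<Longrightarrow> cinv n x = x" by (auto simp: cinv_def)
qed simp

lemma inv_c: "inv (sigma_inf_std n) = cinv n"
  by (rule permutes_invI[OF c_perm]) (simp, simp add: cinv_def)

lemma c_pow_down: "x \<in> pts n \<Longrightarrow> k < x \<Longrightarrow> (sigma_inf_std n ^^ k) x = x - k"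
proof (induction k)
  case 0 then show ?case by simp
next
  case (Suc k)
  then have "(sigma_inf_std n ^^ k) x = x - k" by simp
  then have "(sigma_inf_std n ^^ Suc k) x = sigma_inf_std n (x - k)" by simp
  moreover have "sigma_inf_std n (x - k) = x - Suc k" using Suc.prems
    unfolding sigma_inf_std_def pts_def by auto
  ultimately show ?case by simp
qed

lemma c_full: "full_cycle (pts n) (sigma_inf_std n)"
  unfolding full_cycle_def
proof (intro conjI ballI c_perm)
  fix x assume x: "x \<in> pts n"
  let ?c = "sigma_inf_std n"
  show "pts n = {(?c ^^ k) x | k. True}"
  proof
    show "{(?c ^^ k) x | k. True} \<subseteq> pts n"
    proof (rule subsetI)
      fix y assume "y \<in> {(?c ^^ k) x | k. True}"
      then obtain k where "y = (?c ^^ k) x" by blast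
      then show "y \<in> pts n" using permutes_in_image[OF permutes_funpow[OF c_perm[of n], of k]] x by simp
    qed
  next
    show "pts n \<subseteq> {(?c ^^ k) x | k. True}"
    proof
      fix y assume y: "y \<in> pts n"
      show "y \<in> {(?c ^^ k) x | k. True}"
      proof (cases "y \<le> x")
        case True
        then have "(?c ^^ (x - y)) x = y" using c_pow_down[OF x, of "x - y"] y by (simp add: pts_def)
        then show ?thesis by (intro CollectI exI[of _ "x - y"]) simp
      next
        case False
        have x1: "(?c ^^ (x - 1)) x = 1" using c_pow_down[OF x, of "x - 1"] x by (simp add: pts_def)
        have "x = Suc (x - 1)" using x by (simp add: pts_def)
        then have "(?c ^^ x) x = (?c ^^ Suc (x - 1)) x" by simp
        also have "\<dots> = ?c ((?c ^^ (x - 1)) x)" by (simp only: funpow.simps o_apply)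
        finally have "(?c ^^ x) x = ?c ((?c ^^ (x - 1)) x)" .
        then have xN: "(?c ^^ x) x = 2 * n" using x1 x by (simp add: sigma_inf_std_def pts_def)
        have N: "2 * n \<in> pts n" using x by (auto simp: pts_def)
        have "(?c ^^ (2 * n - y)) (2 * n) = y" using c_pow_down[OF N, of "2 * n - y"] y by (auto simp: pts_def)
        then have "(?c ^^ (2 * n - y + x)) x = y" using xN by (simp add: funpow_add)
        then show ?thesis by (intro CollectI exI[of _ "2 * n - y + x"]) simp
      qed
    qed
  qed
qed

lemma c_period: "(sigma_inf_std n ^^ (2 * n)) x = x"
proof (cases "x \<in> pts n")
  case True
  then show ?thesis using orbit_facts(1)[OF c_full finite_pts True] by simp
next
  case False
  then show ?thesis using c_perm by (metis permutes_funpow permutes_not_in)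
qed

lemma comm_funpow: "g \<circ> s = s \<circ> g \<Longrightarrow> g ((s ^^ k) x) = (s ^^ k) (g x)"
  by (induction k) (auto simp: fun_eq_iff)

lemma comm_c_eq:
  assumes g: "g permutes pts n" and h: "h permutes pts n"
    and gc: "g \<circ> sigma_inf_std n = sigma_inf_std n \<circ> g" and hc: "h \<circ> sigma_inf_std n = sigma_inf_std n \<circ> h"
    and y: "y \<in> pts n" and gy: "g y = h y"
  shows "g = h"
proof
  fix x show "g x = h x"
  proof (cases "x \<in> pts n")
    case True
    have "pts n = {(sigma_inf_std n ^^ k) y | k. True}" using c_full y unfolding full_cycle_def by blast
    then obtain k where "x = (sigma_inf_std n ^^ k) y" using True by blast
    then show ?thesis using comm_funpow[OF gc, of k y] comm_funpow[OF hc, of k y] gy by simp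
  next
    case False then show ?thesis using g h by (metis permutes_not_in)
  qed
qed

definition S0 :: "nat \<Rightarrow> nat \<Rightarrow> nat \<Rightarrow> nat \<Rightarrow> nat" where
  "S0 n a b x = (if 1 \<le> x \<and> x \<le> 2*a then 2*a+1-x
     else if 2*a < x \<and> x \<le> 2*a+2*b then 4*a+2*b+1-x
     else if 2*a+2*b < x \<and> x \<le> 2*n then 2*a+2*b+2*n+1-x else x)"

definition rho0 :: "nat \<Rightarrow> nat \<Rightarrow> nat \<Rightarrow> nat \<Rightarrow> nat" where
  "rho0 n a b x = (if 1 \<le> x \<and> x < 2*a then 2*a - x
     else if x = 2*a then 2*a+2*b
     else if 2*a < x \<and> x < 2*a+2*b then 4*a+2*b - x
     else if x = 2*a+2*b then 2*n
     else if 2*a+2*b < x \<and> x < 2*n then 2*a+2*b+2*n - x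
     else if x = 2*n then 2*a else x)"

definition S1 :: "nat \<Rightarrow> nat \<Rightarrow> nat \<Rightarrow> nat \<Rightarrow> nat" where
  "S1 n a b x = (if 1 \<le> x \<and> x < 2*a then 2*a - x
     else if x = 2*a then 2*a
     else if 2*a < x \<and> x < 2*a+2*b then 4*a+2*b - x
     else if x = 2*a+2*b then 2*n
     else if 2*a+2*b < x \<and> x < 2*n then 2*a+2*b+2*n - x
     else if x = 2*n then 2*a+2*b else x)"

definition Tt :: "nat \<Rightarrow> nat \<Rightarrow> nat \<Rightarrow> nat" where
  "Tt a b = transpose (2*a) (2*a+2*b)"

definition canon :: "nat \<Rightarrow> nat \<Rightarrow> nat \<Rightarrow> tuple4" where
  "canon n a b = (S0 n a b, sigma_inf_std n, S1 n a b, Tt a b)"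

locale prm =
  fixes n a b :: nat
  assumes a: "1 \<le> a" and b: "1 \<le> b" and ab: "a + b < n"
begin

lemma cases4:
  obtains "1 \<le> x \<and> x \<le> 2*a" | "2*a < x \<and> x \<le> 2*a+2*b" | "2*a+2*b < x \<and> x \<le> 2*n" | "x = 0 \<or> 2*n < x"
  by linarith

lemma cases7:
  obtains "1 \<le> x \<and> x < 2*a" | "x = 2*a" | "2*a < x \<and> x < 2*a+2*b" | "x = 2*a+2*b"
   | "2*a+2*b < x \<and> x < 2*n" | "x = 2*n" | "x = 0 \<or> 2*n < x"
  by linarith

lemma S0_1: "1 \<le> x \<and> x \<le> 2*a \<Longrightarrow> S0 n a b x = 2*a+1-x" by (simp add: S0_def)
lemma S0_2: "2*a < x \<and> x \<le> 2*a+2*b \<Longrightarrow> S0 n a b x = 4*a+2*b+1-x" by (simp add: S0_def)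
lemma S0_3: "2*a+2*b < x \<and> x \<le> 2*n \<Longrightarrow> S0 n a b x = 2*a+2*b+2*n+1-x" by (simp add: S0_def)
lemma S0_4: "x = 0 \<or> 2*n < x \<Longrightarrow> S0 n a b x = x" using ab by (auto simp: S0_def)

lemma r_1: "1 \<le> x \<and> x < 2*a \<Longrightarrow> rho0 n a b x = 2*a-x" by (simp add: rho0_def)
lemma r_2: "x = 2*a \<Longrightarrow> rho0 n a b x = 2*a+2*b" by (simp add: rho0_def)
lemma r_3: "2*a < x \<and> x < 2*a+2*b \<Longrightarrow> rho0 n a b x = 4*a+2*b-x" by (simp add: rho0_def)
lemma r_4: "x = 2*a+2*b \<Longrightarrow> rho0 n a b x = 2*n" using b by (simp add: rho0_def)
lemma r_5: "2*a+2*b < x \<and> x < 2*n \<Longrightarrow> rho0 n a b x = 2*a+2*b+2*n-x" by (simp add: rho0_def)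
lemma r_6: "x = 2*n \<Longrightarrow> rho0 n a b x = 2*a" using a b ab by (simp add: rho0_def)
lemma r_7: "x = 0 \<or> 2*n < x \<Longrightarrow> rho0 n a b x = x" using a b ab by (auto simp: rho0_def)

lemma t_1: "1 \<le> x \<and> x < 2*a \<Longrightarrow> S1 n a b x = 2*a-x" by (simp add: S1_def)
lemma t_2: "x = 2*a \<Longrightarrow> S1 n a b x = 2*a" by (simp add: S1_def)
lemma t_3: "2*a < x \<and> x < 2*a+2*b \<Longrightarrow> S1 n a b x = 4*a+2*b-x" by (simp add: S1_def)
lemma t_4: "x = 2*a+2*b \<Longrightarrow> S1 n a b x = 2*n" using b by (simp add: S1_def)
lemma t_5: "2*a+2*b < x \<and> x < 2*n \<Longrightarrow> S1 n a b x = 2*a+2*b+2*n-x" by (simp add: S1_def)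
lemma t_6: "x = 2*n \<Longrightarrow> S1 n a b x = 2*a+2*b" using a b ab by (simp add: S1_def)
lemma t_7: "x = 0 \<or> 2*n < x \<Longrightarrow> S1 n a b x = x" using a b ab by (auto simp: S1_def)

lemma S0_invol: "S0 n a b (S0 n a b x) = x"
proof (cases x rule: cases4)
  case 1
  have e1: "S0 n a b x = 2*a+1-x" by (rule S0_1) (use 1 a b ab in arith)
  have e2: "S0 n a b (2*a+1-x) = 2*a+1-(2*a+1-x)" by (rule S0_1) (use 1 a b ab in arith)
  show ?thesis using e1 e2 1 a b ab by simp
next
  case 2
  have e1: "S0 n a b x = 4*a+2*b+1-x" by (rule S0_2) (use 2 a b ab in arith)
  have e2: "S0 n a b (4*a+2*b+1-x) = 4*a+2*b+1-(4*a+2*b+1-x)" by (rule S0_2) (use 2 a b ab in arith)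
  show ?thesis using e1 e2 2 a b ab by simp
next
  case 3
  have e1: "S0 n a b x = 2*a+2*b+2*n+1-x" by (rule S0_3) (use 3 a b ab in arith)
  have e2: "S0 n a b (2*a+2*b+2*n+1-x) = 2*a+2*b+2*n+1-(2*a+2*b+2*n+1-x)" by (rule S0_3) (use 3 a b ab in arith)
  show ?thesis using e1 e2 3 a b ab by simp
next
  case 4 then show ?thesis by (simp add: S0_4)
qed

lemma S0_fix: assumes x: "x \<in> pts n" shows "S0 n a b x \<noteq> x"
proof (cases x rule: cases4)
  case 1 then show ?thesis by (simp add: S0_1) presburger
next
  case 2 then show ?thesis by (simp add: S0_2) presburger
next
  case 3 then show ?thesis by (simp add: S0_3) presburger
next
  case 4 then show ?thesis using x by (simp add: pts_def)
qed

lemma S0_in: assumes x: "x \<in> pts n" shows "S0 n a b x \<in> pts n"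
proof (cases x rule: cases4)
  case 1 then show ?thesis using ab by (simp add: S0_1 pts_def; arith)
next
  case 2 then show ?thesis using ab by (simp add: S0_2 pts_def; arith)
next
  case 3 then show ?thesis using ab by (simp add: S0_3 pts_def; arith)
next
  case 4 then show ?thesis using x by (simp add: pts_def)
qed

lemma S0_perm: "S0 n a b permutes pts n"
proof (rule inj_imp_permutes)
  show "inj_on (S0 n a b) (pts n)" by (metis S0_invol inj_onI)
  show "\<And>x. x \<in> pts n \<Longrightarrow> S0 n a b x \<in> pts n" by (rule S0_in)
  show "\<And>x. x \<notin> pts n \<Longrightarrow> S0 n a b x = x" by (rule S0_4) (auto simp: pts_def)
qed simp

lemma rho0_eq: "rho0 n a b = S0 n a b \<circ> cinv n"
proof
  fix x show "rho0 n a b x = (S0 n a b \<circ> cinv n) x"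
  proof (cases x rule: cases7)
    case 1
    have c: "cinv n x = x+1" using 1 a b ab by (simp add: cinv_def pts_def)
    have e1: "S0 n a b (x+1) = 2*a+1-(x+1)" by (rule S0_1) (use 1 a b ab in arith)
    have e2: "rho0 n a b x = 2*a-x" by (rule r_1) (use 1 a b ab in arith)
    show ?thesis using c e1 e2 1 a b ab by simp
  next
    case 2
    have c: "cinv n x = x+1" using 2 a b ab by (simp add: cinv_def pts_def)
    have e1: "S0 n a b (x+1) = 4*a+2*b+1-(x+1)" by (rule S0_2) (use 2 a b ab in arith)
    have e2: "rho0 n a b x = 2*a+2*b" by (rule r_2) (use 2 a b ab in arith)
    show ?thesis using c e1 e2 2 a b ab by simp
  next
    case 3
    have c: "cinv n x = x+1" using 3 a b ab by (simp add: cinv_def pts_def)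
    have e1: "S0 n a b (x+1) = 4*a+2*b+1-(x+1)" by (rule S0_2) (use 3 a b ab in arith)
    have e2: "rho0 n a b x = 4*a+2*b-x" by (rule r_3) (use 3 a b ab in arith)
    show ?thesis using c e1 e2 3 a b ab by simp
  next
    case 4
    have c: "cinv n x = x+1" using 4 a b ab by (simp add: cinv_def pts_def)
    have e1: "S0 n a b (x+1) = 2*a+2*b+2*n+1-(x+1)" by (rule S0_3) (use 4 a b ab in arith)
    have e2: "rho0 n a b x = 2*n" by (rule r_4) (use 4 a b ab in arith)
    show ?thesis using c e1 e2 4 a b ab by simp
  next
    case 5
    have c: "cinv n x = x+1" using 5 a b ab by (simp add: cinv_def pts_def)
    have e1: "S0 n a b (x+1) = 2*a+2*b+2*n+1-(x+1)" by (rule S0_3) (use 5 a b ab in arith)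
    have e2: "rho0 n a b x = 2*a+2*b+2*n-x" by (rule r_5) (use 5 a b ab in arith)
    show ?thesis using c e1 e2 5 a b ab by simp
  next
    case 6
    have c: "cinv n x = 1" using 6 a b ab by (simp add: cinv_def pts_def)
    have e1: "S0 n a b (1) = 2*a+1-1" by (rule S0_1) (use 6 a b ab in arith)
    have e2: "rho0 n a b x = 2*a" by (rule r_6) (use 6 a b ab in arith)
    show ?thesis using c e1 e2 6 a b ab by simp
  next
    case 7 then show ?thesis by (auto simp: r_7 S0_4 cinv_def pts_def)
  qed
qed

lemma S1_eq: "S1 n a b = Tt a b \<circ> rho0 n a b"
proof
  fix x show "S1 n a b x = (Tt a b \<circ> rho0 n a b) x"
  proof (cases x rule: cases7)
    case 1
    have e1: "rho0 n a b x = 2*a-x" by (rule r_1) (use 1 a b ab in arith)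
    have e2: "S1 n a b x = 2*a-x" by (rule t_1) (use 1 a b ab in arith)
    show ?thesis unfolding o_def e1 e2 Tt_def transpose_def using 1 a b ab by presburger
  next
    case 2
    have e1: "rho0 n a b x = 2*a+2*b" by (rule r_2) (use 2 a b ab in arith)
    have e2: "S1 n a b x = 2*a" by (rule t_2) (use 2 a b ab in arith)
    show ?thesis unfolding o_def e1 e2 Tt_def transpose_def using 2 a b ab by presburger
  next
    case 3
    have e1: "rho0 n a b x = 4*a+2*b-x" by (rule r_3) (use 3 a b ab in arith)
    have e2: "S1 n a b x = 4*a+2*b-x" by (rule t_3) (use 3 a b ab in arith)
    show ?thesis unfolding o_def e1 e2 Tt_def transpose_def using 3 a b ab by presburger
  next
    case 4
    have e1: "rho0 n a b x = 2*n" by (rule r_4) (use 4 a b ab in arith)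
    have e2: "S1 n a b x = 2*n" by (rule t_4) (use 4 a b ab in arith)
    show ?thesis unfolding o_def e1 e2 Tt_def transpose_def using 4 a b ab by presburger
  next
    case 5
    have e1: "rho0 n a b x = 2*a+2*b+2*n-x" by (rule r_5) (use 5 a b ab in arith)
    have e2: "S1 n a b x = 2*a+2*b+2*n-x" by (rule t_5) (use 5 a b ab in arith)
    show ?thesis unfolding o_def e1 e2 Tt_def transpose_def using 5 a b ab by presburger
  next
    case 6
    have e1: "rho0 n a b x = 2*a" by (rule r_6) (use 6 a b ab in arith)
    have e2: "S1 n a b x = 2*a+2*b" by (rule t_6) (use 6 a b ab in arith)
    show ?thesis unfolding o_def e1 e2 Tt_def transpose_def using 6 a b ab by presburger
  next
    case 7 then show ?thesis using a b ab by (auto simp: r_7 t_7 Tt_def transpose_def)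
  qed
qed

lemma S1_invol: "S1 n a b (S1 n a b x) = x"
proof (cases x rule: cases7)
  case 1
  have e1: "S1 n a b x = 2*a-x" by (rule t_1) (use 1 a b ab in arith)
  have e2: "S1 n a b (2*a-x) = 2*a-(2*a-x)" by (rule t_1) (use 1 a b ab in arith)
  show ?thesis using e1 e2 1 a b ab by simp
next
  case 2
  have e1: "S1 n a b x = 2*a" by (rule t_2) (use 2 a b ab in arith)
  have e2: "S1 n a b (2*a) = 2*a" by (rule t_2) (use 2 a b ab in arith)
  show ?thesis using e1 e2 2 a b ab by simp
next
  case 3
  have e1: "S1 n a b x = 4*a+2*b-x" by (rule t_3) (use 3 a b ab in arith)
  have e2: "S1 n a b (4*a+2*b-x) = 4*a+2*b-(4*a+2*b-x)" by (rule t_3) (use 3 a b ab in arith)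
  show ?thesis using e1 e2 3 a b ab by simp
next
  case 4
  have e1: "S1 n a b x = 2*n" by (rule t_4) (use 4 a b ab in arith)
  have e2: "S1 n a b (2*n) = 2*a+2*b" by (rule t_6) (use 4 a b ab in arith)
  show ?thesis using e1 e2 4 a b ab by simp
next
  case 5
  have e1: "S1 n a b x = 2*a+2*b+2*n-x" by (rule t_5) (use 5 a b ab in arith)
  have e2: "S1 n a b (2*a+2*b+2*n-x) = 2*a+2*b+2*n-(2*a+2*b+2*n-x)" by (rule t_5) (use 5 a b ab in arith)
  show ?thesis using e1 e2 5 a b ab by simp
next
  case 6
  have e1: "S1 n a b x = 2*a+2*b" by (rule t_6) (use 6 a b ab in arith)
  have e2: "S1 n a b (2*a+2*b) = 2*n" by (rule t_4) (use 6 a b ab in arith)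
  show ?thesis using e1 e2 6 a b ab by simp
next
  case 7 then show ?thesis by (simp add: t_7)
qed

lemma S1_perm: "S1 n a b permutes pts n"
  unfolding S1_eq rho0_eq
  by (intro permutes_compose S0_perm cinv_perm) (unfold Tt_def, rule permutes_swap_id, use a b ab in \<open>auto simp: pts_def\<close>)

lemma rho0_perm: "rho0 n a b permutes pts n"
  unfolding rho0_eq using S0_perm cinv_perm by (rule permutes_compose[rotated])

lemma moved_S0: "moved (S0 n a b) (pts n) = pts n"
  using S0_fix by (auto simp: moved_def)

lemma moved_S1: "moved (S1 n a b) (pts n) = pts n - {a, 2*a, 2*a+b, a+b+n}"
proof (intro set_eqI)
  fix x show "x \<in> moved (S1 n a b) (pts n) \<longleftrightarrow> x \<in> pts n - {a, 2*a, 2*a+b, a+b+n}"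
  proof (cases x rule: cases7)
    case 1 then show ?thesis using a b ab by (auto simp: t_1 moved_def pts_def)
  next
    case 2 then show ?thesis using a b ab by (auto simp: t_2 moved_def pts_def)
  next
    case 3 then show ?thesis using a b ab by (auto simp: t_3 moved_def pts_def)
  next
    case 4 then show ?thesis using a b ab by (auto simp: t_4 moved_def pts_def)
  next
    case 5 then show ?thesis using a b ab by (auto simp: t_5 moved_def pts_def)
  next
    case 6 then show ?thesis using a b ab by (auto simp: t_6 moved_def pts_def)
  next
    case 7 then show ?thesis using a b ab by (auto simp: moved_def pts_def)
  qed
qed

lemma moved_rho0: "moved (rho0 n a b) (pts n) = pts n - {a, 2*a+b, a+b+n}"
proof (intro set_eqI)
  fix x show "x \<in> moved (rho0 n a b) (pts n) \<longleftrightarrow> x \<in> pts n - {a, 2*a+b, a+b+n}"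
  proof (cases x rule: cases7)
    case 1 then show ?thesis using a b ab by (auto simp: r_1 moved_def pts_def)
  next
    case 2 then show ?thesis using a b ab by (auto simp: r_2 moved_def pts_def)
  next
    case 3 then show ?thesis using a b ab by (auto simp: r_3 moved_def pts_def)
  next
    case 4 then show ?thesis using a b ab by (auto simp: r_4 moved_def pts_def)
  next
    case 5 then show ?thesis using a b ab by (auto simp: r_5 moved_def pts_def)
  next
    case 6 then show ?thesis using a b ab by (auto simp: r_6 moved_def pts_def)
  next
    case 7 then show ?thesis using a b ab by (auto simp: moved_def pts_def)
  qed
qed

lemma card_moved_S1: "card (moved (S1 n a b) (pts n)) = 2 * (n - 2)"
proof -
  have sub: "{a, 2*a, 2*a+b, a+b+n} \<subseteq> pts n" using a b ab by (auto simp: pts_def)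
  have "card {a, 2*a, 2*a+b, a+b+n} = 4" using a b ab by auto
  then show ?thesis unfolding moved_S1 using card_Diff_subset[OF _ sub] a b ab by simp
qed

lemma card_moved_rho0: "card (moved (rho0 n a b) (pts n)) = 2 * (n - 3) + 3"
proof -
  have sub: "{a, 2*a+b, a+b+n} \<subseteq> pts n" using a b ab by (auto simp: pts_def)
  have "card {a, 2*a+b, a+b+n} = 3" using a b ab by auto
  then show ?thesis unfolding moved_rho0 using card_Diff_subset[OF _ sub] a b ab by simp
qed

lemma Tt_S1: "Tt a b \<circ> S1 n a b = rho0 n a b"
  unfolding S1_eq by (simp add: Tt_def comp_assoc[symmetric])

lemma canon_adm: "admissible n (canon n a b)"
  unfolding admissible_def canon_def
proof (simp only: prod.case, intro conjI)
  show "disj_transp (pts n) n (S0 n a b)"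
    using S0_perm S0_invol moved_S0 by (simp add: disj_transp_def)
  show "full_cycle (pts n) (sigma_inf_std n)" by (rule c_full)
  show "disj_transp (pts n) (n - 2) (S1 n a b)"
    using S1_perm S1_invol card_moved_S1 by (simp add: disj_transp_def)
  show "is_transp (pts n) (Tt a b)" unfolding is_transp_def Tt_def using a b ab
    by (intro bexI[of _ "2*a"] bexI[of _ "2*a+2*b"]) (auto simp: pts_def)
  have "Tt a b \<circ> S1 n a b \<circ> sigma_inf_std n \<circ> S0 n a b = S0 n a b \<circ> cinv n \<circ> sigma_inf_std n \<circ> S0 n a b"
    using Tt_S1 rho0_eq by simp
  also have "\<dots> = id" by (simp add: fun_eq_iff S0_invol)
  finally show "Tt a b \<circ> S1 n a b \<circ> sigma_inf_std n \<circ> S0 n a b = id" .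
qed

lemma rho0_oth: "\<forall>x. x \<notin> {2*a, 2*a+2*b, 2*n} \<longrightarrow> rho0 n a b (rho0 n a b x) = x"
proof (intro allI impI)
  fix x assume x: "x \<notin> {2*a, 2*a+2*b, 2*n}"
  show "rho0 n a b (rho0 n a b x) = x"
  proof (cases x rule: cases7)
    case 1
    have e1: "rho0 n a b x = 2*a-x" by (rule r_1) (use 1 a b ab in arith)
    have e2: "rho0 n a b (2*a-x) = 2*a-(2*a-x)" by (rule r_1) (use 1 a b ab in arith)
    show ?thesis using e1 e2 1 a b ab by simp
  next
    case 3
    have e1: "rho0 n a b x = 4*a+2*b-x" by (rule r_3) (use 3 a b ab in arith)
    have e2: "rho0 n a b (4*a+2*b-x) = 4*a+2*b-(4*a+2*b-x)" by (rule r_3) (use 3 a b ab in arith)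
    show ?thesis using e1 e2 3 a b ab by simp
  next
    case 5
    have e1: "rho0 n a b x = 2*a+2*b+2*n-x" by (rule r_5) (use 5 a b ab in arith)
    have e2: "rho0 n a b (2*a+2*b+2*n-x) = 2*a+2*b+2*n-(2*a+2*b+2*n-x)" by (rule r_5) (use 5 a b ab in arith)
    show ?thesis using e1 e2 5 a b ab by simp
  next
    case 7 then show ?thesis by (simp add: r_7)
  qed (use x in auto)
qed

lemma canon_3cyc: "transp_and_3cycle (pts n) (n - 3) (Tt a b \<circ> S1 n a b)"
  unfolding Tt_S1 transp_and_3cycle_def
proof (intro conjI exI)
  show "rho0 n a b permutes pts n" by (rule rho0_perm)
  show "has_cycle3 (rho0 n a b) (2*a) (2*a+2*b) (2*n)"
    using a b ab by (simp add: has_cycle3_def r_2 r_4 r_6)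
  show "\<forall>x. x \<notin> {2*a, 2*a+2*b, 2*n} \<longrightarrow> rho0 n a b (rho0 n a b x) = x" by (rule rho0_oth)
  show "card (moved (rho0 n a b) (pts n)) = 2 * (n - 3) + 3" by (rule card_moved_rho0)
qed

end

lemma peel:
  fixes s0 \<rho> :: "nat \<Rightarrow> nat" and C :: "nat set"
  assumes inv: "\<forall>x. s0 (s0 x) = x"
    and rho: "\<forall>x. L \<le> x \<and> x < R \<longrightarrow> \<rho> x = s0 (x + 1)"
    and invol: "\<forall>v. v \<notin> C \<longrightarrow> \<rho> (\<rho> v) = v"
    and closed: "\<forall>v. v \<in> C \<longrightarrow> \<rho> v \<in> C"
    and one: "\<forall>x y. L \<le> x \<and> x < R \<and> L \<le> y \<and> y < R \<and> x \<in> C \<and> y \<in> C \<longrightarrow> x = y"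
    and fpf: "\<forall>x. L \<le> x \<and> x \<le> R \<longrightarrow> s0 x \<noteq> x"
  shows "L \<le> u \<Longrightarrow> u < v \<Longrightarrow> v \<le> R \<Longrightarrow> s0 u = v \<Longrightarrow> u \<le> i \<Longrightarrow> i \<le> v \<Longrightarrow> s0 i = u + v - i"
proof (induction "v - u" arbitrary: u v i rule: less_induct)
  case less
  show ?case
  proof (cases "v = u + 1")
    case True
    then have "i = u \<or> i = v" using less.prems by auto
    then show ?thesis using less.prems inv by auto
  next
    case False
    then have uv: "u + 1 < v" using less.prems by auto
    have r1: "\<rho> (v - 1) = u" using rho less.prems inv uv
      by (metis Suc_eq_plus1 Suc_pred' add_lessD1 le_less_trans less_diff_conv2 less_imp_le_nat less_trans_Suc not_less_eq zero_less_Suc) 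
    have r2: "\<rho> u = v - 1"
    proof (cases "v - 1 \<in> C")
      case True
      then have "u \<in> C" using closed r1 by metis
      moreover have "L \<le> v - 1" "v - 1 < R" "u < R" using less.prems uv by auto
      ultimately have "u = v - 1" using one[rule_format, of u "v - 1"] True less.prems by blast
      then show ?thesis using uv by simp
    next
      case False
      then show ?thesis using invol r1 by metis
    qed
    have s1: "s0 (u + 1) = v - 1" using r2 rho less.prems uv by auto
    have "u + 1 \<noteq> v - 1" using fpf s1 less.prems uv by force
    then have uv2: "u + 1 < v - 1" using uv by auto
    have IH: "s0 j = (u + 1) + (v - 1) - j" if j: "u + 1 \<le> j" "j \<le> v - 1" for j
      by (rule less.hyps) (use less.prems uv2 s1 j in auto)
    show ?thesis
    proof (cases "i = u \<or> i = v")
      case True then show ?thesis using less.prems inv by auto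
    next
      case False then show ?thesis using IH[of i] less.prems uv2 by auto
    qed
  qed
qed


lemma struct_thm:
  assumes n1: "1 \<le> n"
    and inv: "\<forall>x. s0 (s0 x) = x"
    and perm: "s0 permutes pts n"
    and fpf: "\<forall>x\<in>pts n. s0 x \<noteq> x"
    and cyc: "has_cycle3 (s0 \<circ> cinv n) (2*n) q r"
    and oth: "\<forall>v. v \<notin> {2*n, q, r} \<longrightarrow> (s0 \<circ> cinv n) ((s0 \<circ> cinv n) v) = v"
  shows "\<exists>a b. 1 \<le> a \<and> 1 \<le> b \<and> a + b < n \<and> q = 2*a \<and> r = 2*a+2*b \<and> s0 = S0 n a b"
proof -
  define \<rho> where "\<rho> = s0 \<circ> cinv n"
  define C where "C = {2*n, q, r}"
  have rho: "\<And>x. 1 \<le> x \<Longrightarrow> x < 2*n \<Longrightarrow> \<rho> x = s0 (x + 1)"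
    by (simp add: \<rho>_def cinv_def pts_def)
  have invol: "\<forall>v. v \<notin> C \<longrightarrow> \<rho> (\<rho> v) = v" using oth by (simp add: \<rho>_def C_def)
  have closed: "\<forall>v. v \<in> C \<longrightarrow> \<rho> v \<in> C" using cyc by (auto simp: \<rho>_def C_def has_cycle3_def)
  have dist: "2*n \<noteq> q" "q \<noteq> r" "2*n \<noteq> r" using cyc by (auto simp: has_cycle3_def)
  have rq: "\<rho> (2*n) = q" "\<rho> q = r" "\<rho> r = 2*n" using cyc by (auto simp: has_cycle3_def \<rho>_def)
  have N: "2*n \<in> pts n" using n1 by (simp add: pts_def)
  have inpts: "\<And>x. x \<in> pts n \<Longrightarrow> s0 x \<in> pts n" using perm by (simp add: permutes_in_image)
  have q1: "q = s0 1" using rq(1) N by (simp add: \<rho>_def cinv_def)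
  have qp: "q \<in> pts n" using q1 inpts n1 by (simp add: pts_def)
  have "q \<noteq> 1" using q1 fpf n1 by (auto simp: pts_def)
  then have qb: "1 < q" "q < 2*n" using qp dist by (auto simp: pts_def)
  have P1: "\<And>i. 1 \<le> i \<Longrightarrow> i \<le> q \<Longrightarrow> s0 i = 1 + q - i"
  proof -
    fix i assume i: "1 \<le> i" "i \<le> q"
    show "s0 i = 1 + q - i"
    proof (rule peel[of s0 1 q \<rho> C])
      show "\<forall>x. s0 (s0 x) = x" by (rule inv)
      show "\<forall>x. 1 \<le> x \<and> x < q \<longrightarrow> \<rho> x = s0 (x + 1)" using rho qb by auto
      show "\<forall>v. v \<notin> C \<longrightarrow> \<rho> (\<rho> v) = v" by (rule invol)
      show "\<forall>v. v \<in> C \<longrightarrow> \<rho> v \<in> C" by (rule closed)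
      show "\<forall>x y. 1 \<le> x \<and> x < q \<and> 1 \<le> y \<and> y < q \<and> x \<in> C \<and> y \<in> C \<longrightarrow> x = y"
        using qb by (auto simp: C_def)
      show "\<forall>x. 1 \<le> x \<and> x \<le> q \<longrightarrow> s0 x \<noteq> x" using fpf qb by (auto simp: pts_def)
    qed (use i qb q1 in auto)
  qed
  have r1: "s0 (q + 1) = r" using rq(2) rho qb by simp
  then have r2: "s0 r = q + 1" using inv by metis
  have rp: "r \<in> pts n" using r1 inpts qb by (metis add_leD1 atLeastAtMost_iff le_add2 pts_def Suc_eq_plus1 Suc_leI)
  have "\<not> r \<le> q"
  proof
    assume "r \<le> q"
    then have "s0 r = 1 + q - r" using P1 rp by (simp add: pts_def)
    then show False using r2 rp unfolding pts_def by auto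
  qed
  moreover have "r \<noteq> q + 1" using r1 fpf qb by (auto simp: pts_def)
  ultimately have rb: "q + 1 < r" "r < 2*n" using rp dist by (auto simp: pts_def)
  have P2: "\<And>i. q + 1 \<le> i \<Longrightarrow> i \<le> r \<Longrightarrow> s0 i = (q + 1) + r - i"
  proof -
    fix i assume i: "q + 1 \<le> i" "i \<le> r"
    show "s0 i = (q + 1) + r - i"
    proof (rule peel[of s0 "q + 1" r \<rho> C])
      show "\<forall>x. s0 (s0 x) = x" by (rule inv)
      show "\<forall>x. q + 1 \<le> x \<and> x < r \<longrightarrow> \<rho> x = s0 (x + 1)" using rho rb by auto
      show "\<forall>v. v \<notin> C \<longrightarrow> \<rho> (\<rho> v) = v" by (rule invol)
      show "\<forall>v. v \<in> C \<longrightarrow> \<rho> v \<in> C" by (rule closed)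
      show "\<forall>x y. q + 1 \<le> x \<and> x < r \<and> q + 1 \<le> y \<and> y < r \<and> x \<in> C \<and> y \<in> C \<longrightarrow> x = y"
        using rb by (auto simp: C_def)
      show "\<forall>x. q + 1 \<le> x \<and> x \<le> r \<longrightarrow> s0 x \<noteq> x" using fpf rb by (auto simp: pts_def)
    qed (use i rb r1 in auto)
  qed
  have t1: "s0 (r + 1) = 2*n" using rq(3) rho rb by simp
  have "r + 1 \<noteq> 2*n" using t1 fpf N by auto
  then have tb: "r + 1 < 2*n" using rb by auto
  have P3: "\<And>i. r + 1 \<le> i \<Longrightarrow> i \<le> 2*n \<Longrightarrow> s0 i = (r + 1) + 2*n - i"
  proof -
    fix i assume i: "r + 1 \<le> i" "i \<le> 2*n"
    show "s0 i = (r + 1) + 2*n - i"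
    proof (rule peel[of s0 "r + 1" "2*n" \<rho> C])
      show "\<forall>x. s0 (s0 x) = x" by (rule inv)
      show "\<forall>x. r + 1 \<le> x \<and> x < 2*n \<longrightarrow> \<rho> x = s0 (x + 1)" using rho rb by auto
      show "\<forall>v. v \<notin> C \<longrightarrow> \<rho> (\<rho> v) = v" by (rule invol)
      show "\<forall>v. v \<in> C \<longrightarrow> \<rho> v \<in> C" by (rule closed)
      show "\<forall>x y. r + 1 \<le> x \<and> x < 2*n \<and> r + 1 \<le> y \<and> y < 2*n \<and> x \<in> C \<and> y \<in> C \<longrightarrow> x = y"
        using rb qb by (auto simp: C_def)
      show "\<forall>x. r + 1 \<le> x \<and> x \<le> 2*n \<longrightarrow> s0 x \<noteq> x" using fpf rb by (auto simp: pts_def)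
    qed (use i tb t1 in auto)
  qed
  have evq: "even q"
  proof (rule ccontr)
    assume "odd q"
    then obtain k where k: "q = 2*k + 1" by (metis oddE)
    have "s0 (k + 1) = k + 1" using P1[of "k + 1"] k by simp
    then show False using fpf k qb by (auto simp: pts_def)
  qed
  have evr: "even (q + 1 + r) \<Longrightarrow> False"
  proof -
    assume "even (q + 1 + r)"
    then obtain k where k: "q + 1 + r = 2*k" by (metis evenE)
    have "s0 k = k" using P2[of k] k rb by simp
    then show False using fpf k rb by (auto simp: pts_def)
  qed
  obtain a where qa: "q = 2*a" using evq by (metis evenE)
  have "even (r - q)" using evr evq rb by presburger
  then obtain b where rab: "r = 2*a + 2*b" using qa rb by (metis evenE le_add_diff_inverse less_imp_le_nat add_lessD1)
  have pa: "1 \<le> a" "1 \<le> b" "a + b < n" using qa rab qb rb by auto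
  interpret prm n a b using pa by unfold_locales
  have "s0 = S0 n a b"
  proof
    fix x show "s0 x = S0 n a b x"
    proof (cases x rule: cases4)
      case 1 then show ?thesis using P1[of x] qa by (simp add: S0_1)
    next
      case 2 then show ?thesis using P2[of x] qa rab by (simp add: S0_2)
    next
      case 3 then show ?thesis using P3[of x] qa rab by (simp add: S0_3)
    next
      case 4
      then have "x \<notin> pts n" by (auto simp: pts_def)
      then show ?thesis using 4 perm by (metis S0_4 permutes_not_in)
    qed
  qed
  then show ?thesis using pa qa rab by blast
qed

lemma tr3:
  fixes s1 :: "nat \<Rightarrow> nat"
  assumes inv: "\<forall>v. s1 (s1 v) = v" and xy: "x \<noteq> y"
    and cyc: "has_cycle3 (transpose x y \<circ> s1) a b c"
  shows "(s1 x = x \<and> s1 y \<noteq> y) \<or> (s1 y = y \<and> s1 x \<noteq> x)"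
proof (rule ccontr)
  define \<rho> where "\<rho> = transpose x y \<circ> s1"
  have ca: "\<rho> a = b" "\<rho> b = c" "\<rho> c = a" "a \<noteq> b" "b \<noteq> c" "a \<noteq> c"
    using cyc by (auto simp: has_cycle3_def \<rho>_def)
  have inj: "\<And>p q. s1 p = s1 q \<Longrightarrow> p = q" using inv by metis
  assume nt: "\<not> ((s1 x = x \<and> s1 y \<noteq> y) \<or> (s1 y = y \<and> s1 x \<noteq> x))"
  consider "s1 x = x" "s1 y = y" | "s1 x = y" | "s1 x \<noteq> x" "s1 y \<noteq> y" "s1 x \<noteq> y"
    using nt by blast
  then show False
  proof cases
    case 1
    have "\<rho> (\<rho> v) = v" for v
    proof (cases "v = x \<or> v = y")
      case True then show ?thesis using 1 xy by (auto simp: \<rho>_def)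
    next
      case False
      then have "s1 v \<noteq> x" "s1 v \<noteq> y" using 1 inv by metis+
      then show ?thesis using False inv by (simp add: \<rho>_def)
    qed
    then show False using ca by metis
  next
    case 2
    then have sy: "s1 y = x" using inv by metis
    have "\<rho> (\<rho> v) = v" for v
    proof (cases "v = x \<or> v = y")
      case True then show ?thesis using 2 sy xy by (auto simp: \<rho>_def)
    next
      case False
      then have "s1 v \<noteq> x" "s1 v \<noteq> y" using 2 sy inv by metis+
      then show ?thesis using False inv by (simp add: \<rho>_def)
    qed
    then show False using ca by metis
  next
    case 3
    define u where "u = s1 x"
    define w where "w = s1 y"
    have uw: "u \<noteq> x" "u \<noteq> y" "w \<noteq> x" "w \<noteq> y" "u \<noteq> w" "s1 u = x" "s1 w = y"
      using 3 inv xy unfolding u_def w_def by metis+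
    have r: "\<rho> x = u" "\<rho> u = y" "\<rho> y = w" "\<rho> w = x"
      using uw xy by (auto simp: \<rho>_def u_def w_def)
    have key: "\<rho> (\<rho> (\<rho> v)) = v \<Longrightarrow> \<rho> v = v" for v
    proof (cases "v \<in> {x, u, y, w}")
      case True
      then show "\<rho> (\<rho> (\<rho> v)) = v \<Longrightarrow> \<rho> v = v" using r uw xy by auto
    next
      case False
      have "s1 v \<noteq> x" using False inv u_def by (metis insertCI)
      moreover have "s1 v \<noteq> y" using False inv w_def by (metis insertCI)
      moreover have "s1 v \<noteq> u" using False inv u_def by (metis insertCI)
      moreover have "s1 v \<noteq> w" using False inv w_def by (metis insertCI)
      ultimately have "s1 v \<notin> {x, u, y, w}" by simp
      then have "\<rho> v = s1 v" "\<rho> (s1 v) = v" using False inv by (auto simp: \<rho>_def)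
      then show "\<rho> (\<rho> (\<rho> v)) = v \<Longrightarrow> \<rho> v = v" by simp
    qed
    then show False using ca by metis
  qed
qed

abbreviation "cc n \<equiv> sigma_inf_std n"

lemma disj_transp_invol: "disj_transp S m s \<Longrightarrow> s (s x) = x"
  by (simp add: disj_transp_def)

lemma conj_c_comm:
  assumes g: "g permutes pts n" and e: "g \<circ> cc n \<circ> inv g = cc n"
  shows "g \<circ> cc n = cc n \<circ> g"
proof -
  have "g \<circ> cc n = (g \<circ> cc n \<circ> inv g) \<circ> g" using g by (simp add: comp_assoc permutes_inv_o)
  then show ?thesis using e by simp
qed

lemma comm_conj_c:
  assumes g: "g permutes pts n" and e: "g \<circ> cc n = cc n \<circ> g"
  shows "g \<circ> cc n \<circ> inv g = cc n"
  using g e by (simp add: comp_assoc permutes_inv_o)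

definition rot :: "nat \<Rightarrow> nat \<Rightarrow> nat \<Rightarrow> nat" where
  "rot n y = cc n ^^ (SOME k. (cc n ^^ k) y = 2 * n)"

lemma rot_props:
  assumes y: "y \<in> pts n"
  shows "rot n y permutes pts n" "rot n y \<circ> cc n = cc n \<circ> rot n y" "rot n y y = 2 * n"
proof -
  have N: "2 * n \<in> pts n" using y by (auto simp: pts_def)
  have "pts n = {(cc n ^^ k) y | k. True}" using c_full y unfolding full_cycle_def by blast
  then have "\<exists>k. (cc n ^^ k) y = 2 * n" using N by auto
  then show "rot n y y = 2 * n" unfolding rot_def by (rule someI_ex)
  show "rot n y permutes pts n" unfolding rot_def by (rule permutes_funpow[OF c_perm])
  show "rot n y \<circ> cc n = cc n \<circ> rot n y" unfolding rot_def by (simp add: funpow_swap1 fun_eq_iff)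
qed

lemma part1:
  assumes n1: "1 \<le> n" and sp: "special n (s0, sinf, s1, t)" and cyc: "has_cycle3 (t \<circ> s1) p1 p2 p3"
  shows "card {T' \<in> conj_class n (s0, sinf, s1, t). special n T'} = 3"
proof -
  define T where "T = (s0, sinf, s1, t)"
  have adm: "admissible n T" and si: "sinf = cc n" and s1N: "s1 (2*n) = 2*n" and tN: "t (2*n) = 2*n"
    using sp by (auto simp: special_def T_def)
  have d1: "disj_transp (pts n) (n - 2) s1" and ist: "is_transp (pts n) t"
    using adm by (auto simp: admissible_def T_def)
  have s1inv: "\<forall>v. s1 (s1 v) = v" using d1 by (simp add: disj_transp_def)
  have s1perm: "s1 permutes pts n" using d1 by (simp add: disj_transp_def)
  obtain x0 y0 where xy: "x0 \<in> pts n" "y0 \<in> pts n" "x0 \<noteq> y0" "t = transpose x0 y0"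
    "s1 x0 = x0" "s1 y0 \<noteq> y0"
  proof -
    obtain x y where xy: "x \<in> pts n" "y \<in> pts n" "x \<noteq> y" "t = transpose x y"
      using ist by (auto simp: is_transp_def)
    then have "(s1 x = x \<and> s1 y \<noteq> y) \<or> (s1 y = y \<and> s1 x \<noteq> x)"
      using tr3[OF s1inv xy(3)] cyc by simp
    then show ?thesis
    proof
      assume "s1 x = x \<and> s1 y \<noteq> y" then show ?thesis using that xy by blast
    next
      assume "s1 y = y \<and> s1 x \<noteq> x" then show ?thesis using that[of y x] xy
        by (simp add: transpose_commute)
    qed
  qed
  define F where "F = {y \<in> pts n. s1 y = y \<and> t y = y}"
  have Fix1: "{y \<in> pts n. s1 y = y} = pts n - moved s1 (pts n)" by (auto simp: moved_def)
  have "moved s1 (pts n) \<subseteq> pts n" by (auto simp: moved_def)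
  then have cF1: "card {y \<in> pts n. s1 y = y} = 2 * n - 2 * (n - 2)"
    unfolding Fix1 using d1 by (simp add: card_Diff_subset disj_transp_def finite_subset)
  have "y0 \<in> moved s1 (pts n)" using xy by (simp add: moved_def)
  then have "card (moved s1 (pts n)) \<noteq> 0" by (auto simp: moved_def)
  then have n3: "n \<ge> 3" using d1 by (simp add: disj_transp_def)
  have F_eq: "F = {y \<in> pts n. s1 y = y} - {x0}"
    using xy by (auto simp: F_def transpose_def)
  have cF: "card F = 3"
    unfolding F_eq using cF1 xy n3 by simp
  define \<psi> where "\<psi> y = conj4 (rot n y) T" for y
  have Fp: "\<And>y. y \<in> F \<Longrightarrow> y \<in> pts n" by (simp add: F_def)
  have SP: "{T' \<in> conj_class n T. special n T'} = \<psi> ` F"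
  proof
    show "\<psi> ` F \<subseteq> {T' \<in> conj_class n T. special n T'}"
    proof
      fix T' assume "T' \<in> \<psi> ` F"
      then obtain y where y: "y \<in> F" "T' = \<psi> y" by blast
      note rp = rot_props[OF Fp[OF y(1)]]
      have iy: "inv (rot n y) (2 * n) = y" using rp(1,3) by (simp add: permutes_inv_eq)
      have "admissible n T'" using y conj4_admissible[OF rp(1) adm] by (simp add: \<psi>_def)
      moreover have "T' = (rot n y \<circ> s0 \<circ> inv (rot n y), cc n, rot n y \<circ> s1 \<circ> inv (rot n y), rot n y \<circ> t \<circ> inv (rot n y))"
        using y comm_conj_c[OF rp(1,2)] by (simp add: \<psi>_def conj4_def T_def si)
      moreover have "s1 y = y" "t y = y" using y by (auto simp: F_def)
      ultimately have "special n T'" using iy rp(3) by (simp add: special_def)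
      moreover have "T' \<in> conj_class n T" using y rp(1) by (auto simp: conj_class_def \<psi>_def)
      ultimately show "T' \<in> {T' \<in> conj_class n T. special n T'}" by simp
    qed
  next
    show "{T' \<in> conj_class n T. special n T'} \<subseteq> \<psi> ` F"
    proof
      fix T' assume "T' \<in> {T' \<in> conj_class n T. special n T'}"
      then obtain g where g: "g permutes pts n" "T' = conj4 g T" "special n T'"
        by (auto simp: conj_class_def)
      have e: "g \<circ> cc n \<circ> inv g = cc n" "g (s1 (inv g (2*n))) = 2*n" "g (t (inv g (2*n))) = 2*n"
        using g(2,3) by (auto simp: conj4_def T_def special_def si)
      define y where "y = inv g (2*n)"
      have N: "2 * n \<in> pts n" using n1 by (simp add: pts_def)
      have yp: "y \<in> pts n" using N permutes_inv[OF g(1)] by (simp add: y_def permutes_in_image)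
      have gy: "g y = 2 * n" using g(1) by (simp add: y_def permutes_inverses)
      have inj: "inj g" using g(1) permutes_inj by blast
      have "g (s1 y) = g y" "g (t y) = g y" using e(2,3) gy by (simp_all add: y_def)
      then have "s1 y = y" "t y = y" using inj by (meson injD)+
      then have yF: "y \<in> F" using yp by (simp add: F_def)
      have "g = rot n y"
        using comm_c_eq[OF g(1) rot_props(1)[OF yp] conj_c_comm[OF g(1) e(1)] rot_props(2)[OF yp] yp]
          gy rot_props(3)[OF yp] by simp
      then show "T' \<in> \<psi> ` F" using g(2) yF by (auto simp: \<psi>_def)
    qed
  qed
  have inj: "inj_on \<psi> F"
  proof (rule inj_onI)
    fix y y' assume yy: "y \<in> F" "y' \<in> F" "\<psi> y = \<psi> y'"
    define A where "A = rot n y"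
    define B where "B = rot n y'"
    have A: "A permutes pts n" "A \<circ> cc n = cc n \<circ> A" "A y = 2*n" using rot_props[OF Fp[OF yy(1)]] by (auto simp: A_def)
    have B: "B permutes pts n" "B \<circ> cc n = cc n \<circ> B" "B y' = 2*n" using rot_props[OF Fp[OF yy(2)]] by (auto simp: B_def)
    have eqs: "A \<circ> s1 \<circ> inv A = B \<circ> s1 \<circ> inv B" "A \<circ> t \<circ> inv A = B \<circ> t \<circ> inv B"
      using yy(3) by (simp_all add: \<psi>_def conj4_def T_def A_def B_def)
    define p where "p = A x0"
    have "(A \<circ> s1 \<circ> inv A) p = p" using A(1) xy by (simp add: p_def permutes_inverses)
    then have f1: "s1 (inv B p) = inv B p" using eqs(1) B(1)
      by (metis comp_apply permutes_inverses(2))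
    have injA: "inj A" using A(1) permutes_inj by blast
    have "(A \<circ> t \<circ> inv A) p \<noteq> p" using A(1) xy injA by (simp add: p_def permutes_inverses inj_eq)
    then have "B (t (inv B p)) \<noteq> p" using eqs(2) by simp
    then have "t (inv B p) \<noteq> inv B p" using B(1) by (metis permutes_inverses(1))
    then have "inv B p = x0 \<or> inv B p = y0" using xy by (metis transpose_apply_other)
    then have "inv B p = x0" using f1 xy by auto
    then have "B x0 = A x0" using B(1) by (metis p_def permutes_inverses(1))
    then have "A = B" using comm_c_eq[OF A(1) B(1) A(2) B(2) xy(1)] by simp
    then have "A y = A y'" using A(3) B(3) by simp
    then show "y = y'" using injA by (simp add: inj_eq)
  qed
  show ?thesis using SP inj cF card_image T_def by metis
qed

lemma to_canon:
  assumes n1: "1 \<le> n" and adm: "admissible n T"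
    and tc: "case T of (a0, ainf, a1, at) \<Rightarrow> transp_and_3cycle (pts n) (n - 3) (at \<circ> a1)"
  shows "\<exists>a b. 1 \<le> a \<and> 1 \<le> b \<and> a + b < n \<and> conj_class n T = conj_class n (canon n a b)"
proof -
  obtain s0 \<sigma> s1 t where T: "T = (s0, \<sigma>, s1, t)" by (cases T) auto
  have d0: "disj_transp (pts n) n s0" and fc: "full_cycle (pts n) \<sigma>"
    and d1: "disj_transp (pts n) (n - 2) s1" and ist: "is_transp (pts n) t"
    and eq: "t \<circ> s1 \<circ> \<sigma> \<circ> s0 = id" using adm by (auto simp: admissible_def T)
  have s0inv: "\<forall>v. s0 (s0 v) = v" and s0perm: "s0 permutes pts n" using d0 by (auto simp: disj_transp_def)
  have s1inv: "\<forall>v. s1 (s1 v) = v" and s1perm: "s1 permutes pts n" using d1 by (auto simp: disj_transp_def)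
  have mv: "moved s0 (pts n) = pts n"
    using d0 by (intro card_subset_eq) (auto simp: disj_transp_def moved_def)
  have fpf0: "\<forall>v\<in>pts n. s0 v \<noteq> v" using mv by (auto simp: moved_def)
  have \<sigma>perm: "\<sigma> permutes pts n" using fc by (simp add: full_cycle_def)
  define \<rho> where "\<rho> = t \<circ> s1"
  obtain a1 b1 c1 where cyc1: "has_cycle3 \<rho> a1 b1 c1" and oth1: "\<forall>v. v \<notin> {a1, b1, c1} \<longrightarrow> \<rho> (\<rho> v) = v"
    using tc by (auto simp: T transp_and_3cycle_def \<rho>_def)
  obtain x y where xy: "x \<in> pts n" "y \<in> pts n" "x \<noteq> y" "t = transpose x y"
    "s1 x = x" "s1 y \<noteq> y"
  proof -
    obtain x y where xy: "x \<in> pts n" "y \<in> pts n" "x \<noteq> y" "t = transpose x y"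
      using ist by (auto simp: is_transp_def)
    then have "(s1 x = x \<and> s1 y \<noteq> y) \<or> (s1 y = y \<and> s1 x \<noteq> x)"
      using tr3[OF s1inv xy(3)] cyc1 by (simp add: \<rho>_def)
    then show ?thesis
    proof
      assume "s1 x = x \<and> s1 y \<noteq> y" then show ?thesis using that xy by blast
    next
      assume "s1 y = y \<and> s1 x \<noteq> x" then show ?thesis using that[of y x] xy
        by (simp add: transpose_commute)
    qed
  qed
  define w where "w = s1 y"
  have wx: "w \<noteq> x" using xy s1inv w_def by metis
  have wy: "w \<noteq> y" using xy w_def by simp
  have sw: "s1 w = y" using s1inv w_def by simp
  have rx: "\<rho> x = y" "\<rho> y = w" "\<rho> w = x"
    using xy wx wy sw by (auto simp: \<rho>_def w_def)
  have cyc: "has_cycle3 \<rho> w x y" using rx wx wy xy by (simp add: has_cycle3_def)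
  have sub: "{w, x, y} \<subseteq> {a1, b1, c1}"
  proof -
    have "\<rho> (\<rho> w) \<noteq> w" "\<rho> (\<rho> x) \<noteq> x" "\<rho> (\<rho> y) \<noteq> y" using rx wx wy xy by auto
    then show ?thesis using oth1 by blast
  qed
  have "card {w, x, y} = 3" using wx wy xy by simp
  moreover have "card {a1, b1, c1} \<le> 3" by (simp add: card_insert_le_m1)
  ultimately have seteq: "{w, x, y} = {a1, b1, c1}" using sub by (metis card_seteq finite.emptyI finite_insert)
  have oth: "\<forall>v. v \<notin> {w, x, y} \<longrightarrow> \<rho> (\<rho> v) = v" using oth1 seteq by simp
  have wp: "w \<in> pts n" using xy s1perm by (simp add: w_def permutes_in_image)
  have N: "2 * n \<in> pts n" using n1 by (simp add: pts_def)
  define f where "f k = (\<sigma> ^^ k) w" for k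
  define g where "g k = (cc n ^^ k) (2 * n)" for k
  note of = orbit_facts[OF fc finite_pts wp, folded f_def, unfolded card_pts]
  note oc = orbit_facts[OF c_full finite_pts N, folded g_def, unfolded card_pts]
  define \<gamma> where "\<gamma> v = (if v \<in> pts n then g (the_inv_into {0..<2*n} f v) else v)" for v
  have n0: "0 < 2 * n" using n1 by simp
  have \<gamma>f: "\<gamma> (f k) = g k" for k
  proof -
    have km: "k mod (2*n) \<in> {0..<2*n}" using n0 by simp
    have fk: "f k = f (k mod (2*n))" by (rule of(4))
    have fp: "f (k mod (2*n)) \<in> pts n" using of(3) km by blast
    have "the_inv_into {0..<2*n} f (f (k mod (2*n))) = k mod (2*n)"
      by (rule the_inv_into_f_f[OF of(2) km])
    then have "\<gamma> (f k) = g (k mod (2*n))" using fk fp by (simp add: \<gamma>_def)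
    also have "\<dots> = g k" using oc(4)[of k] by simp
    finally show ?thesis .
  qed
  have \<gamma>\<sigma>: "\<gamma> \<circ> \<sigma> = cc n \<circ> \<gamma>"
  proof
    fix v show "(\<gamma> \<circ> \<sigma>) v = (cc n \<circ> \<gamma>) v"
    proof (cases "v \<in> pts n")
      case True
      then obtain k where k: "v = f k" using of(3) by blast
      have "\<sigma> v = f (Suc k)" by (simp add: k f_def)
      then show ?thesis using k \<gamma>f by (simp add: g_def)
    next
      case False
      have "\<sigma> v = v" using False \<sigma>perm by (metis permutes_not_in)
      moreover have "cc n v = v" using False by (simp add: sigma_inf_std_def)
      ultimately show ?thesis using False by (simp add: \<gamma>_def)
    qed
  qed
  have bf: "bij_betw f {0..<2*n} (pts n)" using of(2,3) by (simp add: bij_betw_def)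
  have bg: "bij_betw g {0..<2*n} (pts n)" using oc(2,3) by (simp add: bij_betw_def)
  have "bij_betw (g \<circ> the_inv_into {0..<2*n} f) (pts n) (pts n)"
    using bij_betw_trans[OF bij_betw_the_inv_into[OF bf] bg] .
  then have "bij_betw \<gamma> (pts n) (pts n)"
    by (rule bij_betw_cong[THEN iffD1, rotated]) (simp add: \<gamma>_def)
  then have \<gamma>perm: "\<gamma> permutes pts n" by (rule bij_imp_permutes) (simp add: \<gamma>_def)
  have \<gamma>w: "\<gamma> w = 2 * n" using \<gamma>f[of 0] by (simp add: f_def g_def)
  have inj\<gamma>: "inj \<gamma>" using \<gamma>perm permutes_inj by blast
  define s0' where "s0' = \<gamma> \<circ> s0 \<circ> inv \<gamma>"
  define s1' where "s1' = \<gamma> \<circ> s1 \<circ> inv \<gamma>"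
  define t' where "t' = \<gamma> \<circ> t \<circ> inv \<gamma>"
  have "\<gamma> \<circ> \<sigma> \<circ> inv \<gamma> = (cc n \<circ> \<gamma>) \<circ> inv \<gamma>" using \<gamma>\<sigma> by simp
  then have \<sigma>': "\<gamma> \<circ> \<sigma> \<circ> inv \<gamma> = cc n" using \<gamma>perm by (simp add: comp_assoc permutes_inv_o)
  have eq': "t' \<circ> s1' \<circ> cc n \<circ> s0' = id"
  proof -
    have "t' \<circ> s1' \<circ> (\<gamma> \<circ> \<sigma> \<circ> inv \<gamma>) \<circ> s0' = \<gamma> \<circ> (t \<circ> s1 \<circ> \<sigma> \<circ> s0) \<circ> inv \<gamma>"
      using \<gamma>perm by (simp add: fun_eq_iff permutes_inverses t'_def s1'_def s0'_def)
    then show ?thesis using eq \<sigma>' \<gamma>perm by (simp add: permutes_inv_o)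
  qed
  have s0'inv: "\<forall>v. s0' (s0' v) = v" using cj_invol[OF \<gamma>perm s0inv] by (simp add: s0'_def)
  have \<rho>': "s0' \<circ> cinv n = \<gamma> \<circ> \<rho> \<circ> inv \<gamma>"
  proof
    fix v
    have "t' (s1' (cc n (s0' (s0' (cinv n v))))) = s0' (cinv n v)" using eq'
      by (metis comp_apply id_apply)
    then have "t' (s1' v) = s0' (cinv n v)" using s0'inv by simp
    moreover have "t' (s1' v) = (\<gamma> \<circ> \<rho> \<circ> inv \<gamma>) v"
      using \<gamma>perm by (simp add: t'_def s1'_def \<rho>_def permutes_inverses)
    ultimately show "(s0' \<circ> cinv n) v = (\<gamma> \<circ> \<rho> \<circ> inv \<gamma>) v" by simp
  qed
  have cyc': "has_cycle3 (s0' \<circ> cinv n) (2*n) (\<gamma> x) (\<gamma> y)"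
    using cyc \<gamma>w inj\<gamma> \<gamma>perm unfolding \<rho>' has_cycle3_def
    by (auto simp: permutes_inverses inj_eq simp del: \<gamma>w) (metis \<gamma>w permutes_inverses(2))
  have oth': "\<forall>v. v \<notin> {2*n, \<gamma> x, \<gamma> y} \<longrightarrow> (s0' \<circ> cinv n) ((s0' \<circ> cinv n) v) = v"
  proof (intro allI impI)
    fix v assume v: "v \<notin> {2*n, \<gamma> x, \<gamma> y}"
    have "inv \<gamma> v \<notin> {w, x, y}" using v \<gamma>w \<gamma>perm by (auto simp: permutes_inverses)
    then have "\<rho> (\<rho> (inv \<gamma> v)) = inv \<gamma> v" using oth by blast
    then show "(s0' \<circ> cinv n) ((s0' \<circ> cinv n) v) = v" unfolding \<rho>' using \<gamma>perm
      by (simp add: permutes_inverses)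
  qed
  have s0'perm: "s0' permutes pts n" using cj_permutes[OF \<gamma>perm s0perm] by (simp add: s0'_def)
  have fpf': "\<forall>v\<in>pts n. s0' v \<noteq> v"
  proof (intro ballI notI)
    fix v assume v: "v \<in> pts n" "s0' v = v"
    have "inv \<gamma> v \<in> pts n" using v permutes_inv[OF \<gamma>perm] by (simp add: permutes_in_image)
    moreover have "s0 (inv \<gamma> v) = inv \<gamma> v" using v(2) \<gamma>perm
      by (metis comp_apply permutes_inverses(2) s0'_def)
    ultimately show False using fpf0 by blast
  qed
  obtain a b where abf: "1 \<le> a" "1 \<le> b" "a + b < n" "\<gamma> x = 2*a" "\<gamma> y = 2*a+2*b" "s0' = S0 n a b"
    using struct_thm[OF n1 s0'inv s0'perm fpf' cyc' oth'] by blast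
  interpret prm n a b using abf by unfold_locales
  have t'eq: "t' = Tt a b" using cj_transpose[OF \<gamma>perm] abf xy by (simp add: t'_def Tt_def)
  have "t' \<circ> s1' = s0' \<circ> cinv n" unfolding \<rho>' using \<gamma>perm
    by (simp add: fun_eq_iff t'_def s1'_def \<rho>_def permutes_inverses)
  then have "t' \<circ> (t' \<circ> s1') = Tt a b \<circ> (S0 n a b \<circ> cinv n)" using t'eq abf(6) by simp
  moreover have "t' \<circ> (t' \<circ> s1') = s1'" by (simp add: fun_eq_iff t'eq Tt_def)
  ultimately have "s1' = Tt a b \<circ> (S0 n a b \<circ> cinv n)" by simp
  then have s1'eq: "s1' = S1 n a b" by (simp add: S1_eq rho0_eq)
  have "conj4 \<gamma> T = (s0', \<gamma> \<circ> \<sigma> \<circ> inv \<gamma>, s1', t')"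
    by (simp add: conj4_def T s0'_def s1'_def t'_def)
  then have "conj4 \<gamma> T = canon n a b"
    using abf(6) s1'eq t'eq \<sigma>' by (simp add: canon_def)
  then have "conj_class n T = conj_class n (canon n a b)" using conj_class_eq[OF \<gamma>perm, of T] by simp
  then show ?thesis using abf by blast
qed

lemma canon_inj:
  assumes p: "1 \<le> a" "1 \<le> b" "a + b < n" and p': "1 \<le> a'" "1 \<le> b'" "a' + b' < n"
    and eq: "conj_class n (canon n a b) = conj_class n (canon n a' b')"
  shows "a = a' \<and> b = b'"
proof -
  interpret P: prm n a b using p by unfold_locales
  interpret P': prm n a' b' using p' by unfold_locales
  have "canon n a' b' \<in> conj_class n (canon n a' b')"
    unfolding conj_class_def by (auto intro!: exI[of _ id] simp: conj4_id)
  then obtain \<gamma> where \<gamma>: "\<gamma> permutes pts n" "canon n a' b' = conj4 \<gamma> (canon n a b)"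
    using eq by (auto simp: conj_class_def)
  have c1: "\<gamma> \<circ> cc n \<circ> inv \<gamma> = cc n" and c2: "S1 n a' b' = \<gamma> \<circ> S1 n a b \<circ> inv \<gamma>"
    and c3: "Tt a' b' = \<gamma> \<circ> Tt a b \<circ> inv \<gamma>" and c0: "S0 n a' b' = \<gamma> \<circ> S0 n a b \<circ> inv \<gamma>"
    using \<gamma>(2) by (simp_all add: canon_def conj4_def)
  have r: "rho0 n a' b' = \<gamma> \<circ> rho0 n a b \<circ> inv \<gamma>"
    using P.Tt_S1 P'.Tt_S1 c2 c3 cj_comp[OF \<gamma>(1)] by metis
  define v where "v = inv \<gamma> (2 * n)"
  have \<gamma>v: "\<gamma> v = 2 * n" using \<gamma>(1) by (simp add: v_def permutes_inverses)
  have inj: "inj \<gamma>" using \<gamma>(1) permutes_inj by blast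
  have "rho0 n a' b' (rho0 n a' b' (2 * n)) = 2*a' + 2*b'" by (simp add: P'.r_6 P'.r_2)
  moreover have "rho0 n a' b' (rho0 n a' b' (2 * n)) = \<gamma> (rho0 n a b (rho0 n a b v))"
    using \<gamma>(1) by (simp add: r v_def permutes_inverses)
  ultimately have "\<gamma> (rho0 n a b (rho0 n a b v)) \<noteq> \<gamma> v" using \<gamma>v p' by simp
  then have "rho0 n a b (rho0 n a b v) \<noteq> v" by metis
  then have v3: "v \<in> {2*a, 2*a+2*b, 2*n}" using P.rho0_oth by blast
  have "Tt a' b' (2 * n) = 2 * n" using p' by (simp add: Tt_def)
  moreover have "Tt a' b' (2 * n) = \<gamma> (Tt a b v)" using \<gamma>(1) by (simp add: c3 v_def permutes_inverses)
  ultimately have "\<gamma> (Tt a b v) = \<gamma> v" using \<gamma>v by simp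
  then have "Tt a b v = v" using inj by (meson injD)
  then have "v = 2 * n" using v3 p by (auto simp: Tt_def)
  then have \<gamma>N: "\<gamma> (2 * n) = 2 * n" using \<gamma>v by simp
  have N: "2 * n \<in> pts n" using p by (simp add: pts_def)
  have "\<gamma> = id"
    using comm_c_eq[OF \<gamma>(1) permutes_id conj_c_comm[OF \<gamma>(1) c1] _ N] \<gamma>N by simp
  then have "S0 n a' b' = S0 n a b" using c0 by simp
  then have e1: "S0 n a' b' 1 = S0 n a b 1" "S0 n a' b' (2*a+1) = S0 n a b (2*a+1)" by simp_all
  have "S0 n a b 1 = 2*a" "S0 n a' b' 1 = 2*a'" using p p' by (simp_all add: P.S0_1 P'.S0_1)
  then have aa: "a = a'" using e1 by simp
  have "S0 n a b (2*a+1) = 2*a+2*b" using p by (simp add: P.S0_2)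
  moreover have "S0 n a' b' (2*a+1) = 2*a+2*b'" using p' aa by (simp add: P'.S0_2)
  ultimately show ?thesis using aa e1 by simp
qed

lemma card_P: "2 * card {(a, b). 1 \<le> a \<and> 1 \<le> b \<and> a + b < (n::nat)} = (n - 1) * (n - 2)"
proof (induction n)
  case 0 then show ?case by simp
next
  case (Suc n)
  define P where "P m = {(a, b). 1 \<le> a \<and> 1 \<le> b \<and> a + b < (m::nat)}" for m
  have fin: "finite (P m)" for m
    by (rule finite_subset[of _ "{0..m} \<times> {0..m}"]) (auto simp: P_def)
  have split: "P (Suc n) = P n \<union> (\<lambda>a. (a, n - a)) ` {1..<n}"
    by (auto simp: P_def image_def)
  have disj: "P n \<inter> (\<lambda>a. (a, n - a)) ` {1..<n} = {}" by (auto simp: P_def)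
  have ci: "card ((\<lambda>a. (a, n - a)) ` {1..<n}) = n - 1"
    by (subst card_image) (auto simp: inj_on_def)
  have "card (P (Suc n)) = card (P n) + (n - 1)"
    unfolding split using fin disj ci by (simp add: card_Un_disjoint)
  then have "2 * card (P (Suc n)) = (n - 1) * (n - 2) + 2 * (n - 1)"
    using Suc.IH by (simp add: P_def)
  also have "\<dots> = (Suc n - 1) * (Suc n - 2)"
    by (cases n; cases "n - 1") (auto simp: algebra_simps)
  finally show ?case by (simp add: P_def)
qed


theorem mainTheorem15:
  fixes n :: nat
  assumes "n \<ge> 1"
  shows "(\<forall>s0 sinf s1 t. special n (s0, sinf, s1, t) \<and>
            (\<exists>h k. has_cycle3 (t \<circ> s1) (2 * n - h) h k) \<longrightarrow>
            card {T' \<in> conj_class n (s0, sinf, s1, t). special n T'} = 3)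
    \<and> card (conj_class n ` {T. admissible n T \<and>
              (case T of (a0, ainf, a1, at) \<Rightarrow> transp_and_3cycle (pts n) (n - 3) (at \<circ> a1))})
        = (n - 1) * (n - 2) div 2"
proof
  show "\<forall>s0 sinf s1 t. special n (s0, sinf, s1, t) \<and>
            (\<exists>h k. has_cycle3 (t \<circ> s1) (2 * n - h) h k) \<longrightarrow>
            card {T' \<in> conj_class n (s0, sinf, s1, t). special n T'} = 3"
  proof (intro allI impI)
    fix s0 sinf s1 t
    assume h: "special n (s0, sinf, s1, t) \<and> (\<exists>h k. has_cycle3 (t \<circ> s1) (2 * n - h) h k)"
    then obtain h k where "has_cycle3 (t \<circ> s1) (2 * n - h) h k" by blast
    then show "card {T' \<in> conj_class n (s0, sinf, s1, t). special n T'} = 3"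
      using part1[OF assms] h by blast
  qed
next
  define A where "A = {T. admissible n T \<and>
              (case T of (a0, ainf, a1, at) \<Rightarrow> transp_and_3cycle (pts n) (n - 3) (at \<circ> a1))}"
  define P where "P = {(a, b). 1 \<le> a \<and> 1 \<le> b \<and> a + b < n}"
  define F where "F = (\<lambda>(a, b). conj_class n (canon n a b))"
  have img: "conj_class n ` A = F ` P"
  proof
    show "conj_class n ` A \<subseteq> F ` P"
    proof
      fix C assume "C \<in> conj_class n ` A"
      then obtain T where T: "T \<in> A" "C = conj_class n T" by blast
      have Ta: "admissible n T" "case T of (a0, ainf, a1, at) \<Rightarrow> transp_and_3cycle (pts n) (n - 3) (at \<circ> a1)"
        using T(1) by (simp_all add: A_def)
      obtain a b where "1 \<le> a" "1 \<le> b" "a + b < n" "conj_class n T = conj_class n (canon n a b)"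
        using to_canon[OF assms Ta] by blast
      then show "C \<in> F ` P" using T(2) by (auto simp: F_def P_def image_def)
    qed
  next
    show "F ` P \<subseteq> conj_class n ` A"
    proof
      fix C assume "C \<in> F ` P"
      then obtain a b where abC: "1 \<le> a" "1 \<le> b" "a + b < n" "C = conj_class n (canon n a b)"
        by (auto simp: F_def P_def)
      interpret prm n a b using abC by unfold_locales
      have "canon n a b \<in> A" using canon_adm canon_3cyc by (simp add: A_def canon_def)
      then show "C \<in> conj_class n ` A" using abC(4) by blast
    qed
  qed
  have inj: "inj_on F P"
  proof (rule inj_onI)
    fix p q assume pq: "p \<in> P" "q \<in> P" "F p = F q"
    obtain a b where p: "p = (a, b)" by (cases p)
    obtain a' b' where q: "q = (a', b')" by (cases q)
    show "p = q" using canon_inj[of a b n a' b'] pq by (simp add: p q P_def F_def)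
  qed
  have "card (conj_class n ` A) = card P" using img inj by (simp add: card_image)
  moreover have "2 * card P = (n - 1) * (n - 2)" unfolding P_def by (rule card_P)
  ultimately show "card (conj_class n ` {T. admissible n T \<and>
              (case T of (a0, ainf, a1, at) \<Rightarrow> transp_and_3cycle (pts n) (n - 3) (at \<circ> a1))})
        = (n - 1) * (n - 2) div 2" unfolding A_def[symmetric] by simp
qed

end
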